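(* Let $b,t\in(0,1/9)$ and let $\mathcal S_t=\{S_1,S_2,S_3\}$ be the system on $\mathbb R$ given by $S_1(x)=tx$, $S_2(x)=bx$, $S_3(x)=(x+8)/9$, with attractor $K$ and $K_3=S_3(K)$. The following are equivalent: (i) for all positive integers $m,n$, $S_1^m(K_3)\cap S_2^n(K_3)=\varnothing$; (ii) $K=\{0\}\cup\bigcup_{m,n\ge0}S_1^mS_2^n(K_3)$, where the sets $S_1^mS_2^n(K_3)$, $(m,n)\in(\mathbb N\cup\{0\})^2$, are pairwise disjoint; (iii) for all positive integers $m,n$, $S_1^m(K)\cap S_2^n(K)=S_1^mS_2^n(K)$.
   Context: The attractor is the unique nonempty compact set $K\subset\mathbb R$ with $K=S_1(K)\cup S_2(K)\cup S_3(K)$; $S^m$ denotes the $m$-fold composition. *)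

theory Defs
  imports "HOL-Analysis.Analysis"
begin

end

theory Submission
  imports Defs
begin

lemma funpow_scale: "((\<lambda>x::real. c*x)^^m) = (\<lambda>x. c^m*x)"
  by (induction m) (auto simp: fun_eq_iff)

lemma cancel_pow:
  fixes t b y y' :: real
  assumes "0<t" "0<b" "t^m*(b^n*y) = t^m'*(b^n'*y')"
  shows "t^(m-m')*(b^(n-n')*y) = t^(m'-m)*(b^(n'-n)*y')"
proof -
  define p where "p = min m m'"
  define q where "q = min n n'"
  have e1: "t^m = t^p * t^(m-m')" "t^m' = t^p * t^(m'-m)"
    unfolding p_def by (simp_all add: power_add[symmetric] min_def)
  have e2: "b^n = b^q * b^(n-n')" "b^n' = b^q * b^(n'-n)"
    unfolding q_def by (simp_all add: power_add[symmetric] min_def)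
  have "(t^p*b^q) * (t^(m-m')*(b^(n-n')*y)) = (t^p*b^q) * (t^(m'-m)*(b^(n'-n)*y'))"
    using assms(3) unfolding e1 e2 by (simp add: algebra_simps)
  moreover have "t^p*b^q \<noteq> 0" using assms by simp
  ultimately show ?thesis using assms(1,2) by auto
qed

lemma small_pow:
  fixes t b :: real
  assumes "0<t" "t<1/9" "0<b" "b<1/9" "(a,c) \<noteq> (0,0)"
  shows "t^a*b^c < 1/9" "0 < t^a*b^c"
proof -
  have ta: "t^a \<le> 1" "b^c \<le> 1" using assms by (simp_all add: power_le_one)
  show "0 < t^a*b^c" using assms by simp
  show "t^a*b^c < 1/9"
  proof (cases a)
    case (Suc a0)
    have "t^a0 \<le> 1" using assms by (simp add: power_le_one)
    hence "t^a \<le> t" using Suc assms by (simp add: mult_left_le)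
    hence "t^a*b^c \<le> t" using ta assms by (meson dual_order.trans mult_left_le zero_le_power less_imp_le)
    thus ?thesis using assms by linarith
  next
    case 0
    then obtain c0 where c: "c = Suc c0" using assms by (cases c) auto
    have "b^c0 \<le> 1" using assms by (simp add: power_le_one)
    hence "b^c \<le> b" using c assms by (simp add: mult_left_le)
    thus ?thesis using 0 assms by simp
  qed
qed


lemma le_scale: "0<(t::real) \<Longrightarrow> t<1 \<Longrightarrow> x \<le> t*x \<Longrightarrow> x \<le> 0"
proof (rule ccontr)
  assume "0<t" "t<1" "x \<le> t*x" "\<not> x \<le> 0"
  hence "t*x < 1*x" by (intro mult_strict_right_mono) auto
  thus False using \<open>x \<le> t*x\<close> by simp
qed

lemma ge_scale: "0<(t::real) \<Longrightarrow> t<1 \<Longrightarrow> t*x \<le> x \<Longrightarrow> 0 \<le> x"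
proof (rule ccontr)
  assume "0<t" "t<1" "t*x \<le> x" "\<not> 0 \<le> x"
  hence "1*x < t*x" by (intro mult_strict_right_mono_neg) auto
  thus False using \<open>t*x \<le> x\<close> by simp
qed

theorem proposition8:
  fixes b t :: real and S1 S2 S3 :: "real \<Rightarrow> real" and K K3 :: "real set"
  assumes "0 < b" "b < 1/9" "0 < t" "t < 1/9"
    and "S1 = (\<lambda>x. t * x)" "S2 = (\<lambda>x. b * x)" "S3 = (\<lambda>x. (x + 8) / 9)"
    and "compact K" "K \<noteq> {}" "K = S1 ` K \<union> S2 ` K \<union> S3 ` K"
    and "K3 = S3 ` K"
  shows "((\<forall>m n::nat. m > 0 \<longrightarrow> n > 0 \<longrightarrow>
            (S1 ^^ m) ` K3 \<inter> (S2 ^^ n) ` K3 = {})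
         \<longleftrightarrow>
          (K = {0} \<union> (\<Union>m::nat. \<Union>n::nat. (S1 ^^ m) ` (S2 ^^ n) ` K3) \<and>
           (\<forall>m n m' n' :: nat. (m, n) \<noteq> (m', n') \<longrightarrow>
              (S1 ^^ m) ` (S2 ^^ n) ` K3 \<inter> (S1 ^^ m') ` (S2 ^^ n') ` K3 = {})))
       \<and>
         ((\<forall>m n::nat. m > 0 \<longrightarrow> n > 0 \<longrightarrow>
            (S1 ^^ m) ` K3 \<inter> (S2 ^^ n) ` K3 = {})
         \<longleftrightarrow>
          (\<forall>m n::nat. m > 0 \<longrightarrow> n > 0 \<longrightarrow>
            (S1 ^^ m) ` K \<inter> (S2 ^^ n) ` K = (S1 ^^ m) ` (S2 ^^ n) ` K))"
proof -
  have f1: "\<And>m. S1^^m = (\<lambda>x. t^m*x)" using assms(5) funpow_scale by simp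
  have f2: "\<And>m. S2^^m = (\<lambda>x. b^m*x)" using assms(6) funpow_scale by simp
  have KK: "K = (\<lambda>x. t*x) ` K \<union> (\<lambda>x. b*x) ` K \<union> (\<lambda>x. (x+8)/9) ` K"
    using assms(5-7,10) by simp
  have KK1: "K \<subseteq> (\<lambda>x. t*x) ` K \<union> (\<lambda>x. b*x) ` K \<union> (\<lambda>x. (x+8)/9) ` K"
    using KK by (rule equalityD1)
  have KK2: "(\<lambda>x. t*x) ` K \<union> (\<lambda>x. b*x) ` K \<union> (\<lambda>x. (x+8)/9) ` K \<subseteq> K"
    using KK by (rule equalityD2)
  have Kc: "x \<in> K \<Longrightarrow> (x \<in> (\<lambda>x. t*x) ` K \<or> x \<in> (\<lambda>x. b*x) ` K \<or> x \<in> (\<lambda>x. (x+8)/9) ` K)" for x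
    using KK1 by (meson UnE subsetD)
  have Kt: "x \<in> K \<Longrightarrow> t*x \<in> K" for x using KK2 by (meson UnI1 imageI subsetD)
  have Kb: "x \<in> K \<Longrightarrow> b*x \<in> K" for x using KK2 by (meson UnI1 UnI2 imageI subsetD)
  have K3K: "K3 \<subseteq> K" using KK2 assms(7,11) by (simp add: le_sup_iff)
  obtain M where M: "M \<in> K" "\<forall>y\<in>K. y \<le> M" using compact_attains_sup[OF assms(8,9)] by blast
  obtain mi where mi: "mi \<in> K" "\<forall>y\<in>K. mi \<le> y" using compact_attains_inf[OF assms(8,9)] by blast
  have "M \<le> 1"
  proof -
    consider (a) y where "y\<in>K" "M = t*y" | (b) y where "y\<in>K" "M = b*y" | (c) y where "y\<in>K" "M = (y+8)/9"
      using Kc[OF M(1)] by blast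
    thus ?thesis
    proof cases
      case a
      hence "M \<le> t*M" using M assms(3) by (simp add: mult_left_mono)
      thus ?thesis using le_scale[of t M] assms(3,4) by simp
    next
      case b
      hence "M \<le> b*M" using M assms(1) by (simp add: mult_left_mono)
      thus ?thesis using le_scale[of b M] assms(1,2) by simp
    next
      case c
      hence "y \<le> M" using M(2) by blast
      thus ?thesis using c by (auto simp: field_simps)
    qed
  qed
  have "mi \<ge> 0"
  proof -
    consider (a) y where "y\<in>K" "mi = t*y" | (b) y where "y\<in>K" "mi = b*y" | (c) y where "y\<in>K" "mi = (y+8)/9"
      using Kc[OF mi(1)] by blast
    thus ?thesis
    proof cases
      case a
      hence "mi \<ge> t*mi" using mi assms(3) by (simp add: mult_left_mono)
      thus ?thesis using ge_scale[of t mi] assms(3,4) by simp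
    next
      case b
      hence "mi \<ge> b*mi" using mi assms(1) by (simp add: mult_left_mono)
      thus ?thesis using ge_scale[of b mi] assms(1,2) by simp
    next
      case c
      hence "mi \<le> y" using mi(2) by blast
      thus ?thesis using c by (auto simp: field_simps)
    qed
  qed
  have "mi \<le> t*mi" using mi Kt by blast
  hence "mi = 0" using \<open>mi \<ge> 0\<close> le_scale[of t mi] assms(3,4) by simp
  hence K0: "0 \<in> K" using mi by simp
  have K01: "x \<in> K \<Longrightarrow> 0 \<le> x \<and> x \<le> 1" for x
  proof -
    assume "x\<in>K"
    hence "mi \<le> x" "x \<le> M" using M(2) mi(2) by auto
    thus ?thesis using \<open>mi = 0\<close> \<open>M \<le> 1\<close> by linarith
  qed
  have K3b: "y \<in> K3 \<Longrightarrow> 8/9 \<le> y \<and> y \<le> 1" for y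
    using K01 assms(7,11) by auto
  have Kpow: "x \<in> K \<Longrightarrow> t^m*(b^n*x) \<in> K" for x m n
  proof (induction m)
    case 0
    then show ?case by (induction n) (auto simp: Kb mult.assoc)
  next
    case (Suc m)
    then show ?case using Kt[of "t^m*(b^n*x)"] by (simp add: mult.assoc)
  qed
  have dec0: "x\<in>K \<Longrightarrow> x > (1/9)^k \<Longrightarrow> \<exists>m n. \<exists>y\<in>K3. x = t^m*(b^n*y)" for k x
  proof (induction k arbitrary: x)
    case 0 then show ?case using K01[of x] by simp
  next
    case (Suc k)
    consider (a) y where "y\<in>K" "x = t*y" | (b) y where "y\<in>K" "x = b*y" | (c) y where "y\<in>K" "x = (y+8)/9"
      using Kc[OF Suc.prems(1)] by blast
    thus ?case
    proof cases
      case a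
      have "y > (1/9)^k"
      proof (rule ccontr)
        assume "\<not> y > (1/9)^k"
        hence "t*y \<le> t*(1/9)^k" using assms(3) by (simp add: mult_left_mono)
        also have "\<dots> \<le> (1/9)*(1/9)^k" using assms(4) by (simp add: mult_right_mono)
        finally show False using Suc.prems a by simp
      qed
      then obtain m n z where "z\<in>K3" "y = t^m*(b^n*z)" using Suc.IH a by blast
      thus ?thesis using a by (intro exI[of _ "Suc m"] exI[of _ n] bexI[of _ z]) auto
    next
      case b
      have "y > (1/9)^k"
      proof (rule ccontr)
        assume "\<not> y > (1/9)^k"
        hence "b*y \<le> b*(1/9)^k" using assms(1) by (simp add: mult_left_mono)
        also have "\<dots> \<le> (1/9)*(1/9)^k" using assms(2) by (simp add: mult_right_mono)
        finally show False using Suc.prems b by simp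
      qed
      then obtain m n z where "z\<in>K3" "y = t^m*(b^n*z)" using Suc.IH b by blast
      thus ?thesis using b by (intro exI[of _ m] exI[of _ "Suc n"] bexI[of _ z]) auto
    next
      case c
      hence "x \<in> K3" using assms(7,11) by simp
      thus ?thesis by (intro exI[of _ 0] exI[of _ 0] bexI[of _ x]) auto
    qed
  qed
  have dec: "x\<in>K \<Longrightarrow> x \<noteq> 0 \<Longrightarrow> \<exists>m n. \<exists>y\<in>K3. x = t^m*(b^n*y)" for x
  proof -
    assume "x\<in>K" "x\<noteq>0"
    hence "x > 0" using K01[of x] by simp
    then obtain k where "(1/9::real)^k < x" using real_arch_pow_inv[of x "1/9"] by auto
    thus ?thesis using dec0 \<open>x\<in>K\<close> by blast
  qed
  define P where "P = (\<forall>m n y z. m>0 \<longrightarrow> n>0 \<longrightarrow> y\<in>K3 \<longrightarrow> z\<in>K3 \<longrightarrow> t^m*y \<noteq> b^n*z)"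
  have eIx: "((\<lambda>x. t^m*x) ` K3 \<inter> (\<lambda>x. b^n*x) ` K3 = {}) \<longleftrightarrow> (\<forall>y z. y\<in>K3 \<longrightarrow> z\<in>K3 \<longrightarrow> t^m*y \<noteq> b^n*z)" for m n
    by auto
  have eI: "(\<forall>m n::nat. m > 0 \<longrightarrow> n > 0 \<longrightarrow> (S1 ^^ m) ` K3 \<inter> (S2 ^^ n) ` K3 = {}) \<longleftrightarrow> P"
    unfolding P_def f1 f2 eIx by blast
  have U: "K = {0} \<union> (\<Union>m::nat. \<Union>n::nat. (S1 ^^ m) ` (S2 ^^ n) ` K3)"
  proof (rule equalityI; rule subsetI)
    fix x assume x: "x \<in> K"
    show "x \<in> {0} \<union> (\<Union>m::nat. \<Union>n::nat. (S1 ^^ m) ` (S2 ^^ n) ` K3)"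
    proof (cases "x = 0")
      case True thus ?thesis by simp
    next
      case False
      then obtain m n y where y: "y\<in>K3" "x = t^m*(b^n*y)" using dec x by blast
      hence "x \<in> (S1 ^^ m) ` (S2 ^^ n) ` K3" unfolding f1 f2 by (simp add: image_image) (rule imageI)
      thus ?thesis by blast
    qed
  next
    fix x assume "x \<in> {0} \<union> (\<Union>m::nat. \<Union>n::nat. (S1 ^^ m) ` (S2 ^^ n) ` K3)"
    then consider "x = 0" | m n y where "y \<in> K3" "x = t^m*(b^n*y)" unfolding f1 f2 by auto
    thus "x \<in> K"
    proof cases
      case 1 thus ?thesis using K0 by simp
    next
      case 2 thus ?thesis using Kpow K3K by blast
    qed
  qed
  have Dtoel: "P \<Longrightarrow> y\<in>K3 \<Longrightarrow> y'\<in>K3 \<Longrightarrow> t^m*(b^n*y) = t^m'*(b^n'*y') \<Longrightarrow> m = m' \<and> n = n'"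
    for m n m' n' y y'
  proof (rule ccontr)
    assume P: P and y: "y\<in>K3" "y'\<in>K3" and eq: "t^m*(b^n*y) = t^m'*(b^n'*y')" and ne: "\<not> (m = m' \<and> n = n')"
    define a where "a = m-m'"
    define a' where "a' = m'-m"
    define c where "c = n-n'"
    define c' where "c' = n'-n"
    have e: "t^a*(b^c*y) = t^a'*(b^c'*y')" unfolding a_def a'_def c_def c'_def
      using cancel_pow[OF assms(3,1) eq] .
    have z: "a*a' = 0" "c*c' = 0" unfolding a_def a'_def c_def c'_def by auto
    have nz: "(a,c) \<noteq> (0,0) \<or> (a',c') \<noteq> (0,0)" using ne unfolding a_def a'_def c_def c'_def by auto
    have yb: "8/9 \<le> y" "y \<le> 1" "8/9 \<le> y'" "y' \<le> 1" using K3b y by auto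
    show False
    proof (cases "(a,c) = (0,0)")
      case True
      hence nz': "(a',c') \<noteq> (0,0)" using nz by auto
      have "y = (t^a'*b^c')*y'" using e True by (simp add: mult.assoc)
      also have "\<dots> \<le> (t^a'*b^c')*1" using yb small_pow[OF assms(3,4,1,2) nz'] by (intro mult_left_mono) auto
      also have "\<dots> < 1/9" using small_pow[OF assms(3,4,1,2) nz'] by simp
      finally show False using yb by simp
    next
      case False
      show False
      proof (cases "(a',c') = (0,0)")
        case True
        have "y' = (t^a*b^c)*y" using e True by (simp add: mult.assoc)
        also have "\<dots> \<le> (t^a*b^c)*1" using yb small_pow[OF assms(3,4,1,2) False] by (intro mult_left_mono) auto
        also have "\<dots> < 1/9" using small_pow[OF assms(3,4,1,2) False] by simp
        finally show False using yb by simp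
      next
        case F2: False
        show False
        proof (cases "a = 0")
          case True
          hence "c > 0" "c' = 0" "a' > 0" using False F2 z by auto
          thus False using P y e True unfolding P_def by (metis mult_1 power_0)
        next
          case a0: False
          hence "a > 0" "a' = 0" "c = 0" "c' > 0" using False F2 z by auto
          thus False using P y e unfolding P_def by (metis mult_1 power_0)
        qed
      qed
    qed
  qed
  have Dx: "((\<lambda>x. t^m*x) ` (\<lambda>x. b^n*x) ` K3 \<inter> (\<lambda>x. t^m'*x) ` (\<lambda>x. b^n'*x) ` K3 = {}) \<longleftrightarrow> (\<forall>y y'. y\<in>K3 \<longrightarrow> y'\<in>K3 \<longrightarrow> t^m*(b^n*y) \<noteq> t^m'*(b^n'*y'))" for m n m' n'
    by (auto simp: image_image)
  have D: "(\<forall>m n m' n' :: nat. (m, n) \<noteq> (m', n') \<longrightarrow>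
              (S1 ^^ m) ` (S2 ^^ n) ` K3 \<inter> (S1 ^^ m') ` (S2 ^^ n') ` K3 = {}) \<longleftrightarrow> P"
    unfolding f1 f2 Dx
  proof
    assume H: "\<forall>m n m' n'. (m, n) \<noteq> (m', n') \<longrightarrow> (\<forall>y y'. y \<in> K3 \<longrightarrow> y' \<in> K3 \<longrightarrow> t ^ m * (b ^ n * y) \<noteq> t ^ m' * (b ^ n' * y'))"
    show P unfolding P_def
    proof (intro allI impI)
      fix m n :: nat and y z
      assume "m>0" "n>0" "y\<in>K3" "z\<in>K3"
      hence "(m,0) \<noteq> (0,n)" by auto
      hence "t ^ m * (b ^ 0 * y) \<noteq> t ^ 0 * (b ^ n * z)" using H \<open>y\<in>K3\<close> \<open>z\<in>K3\<close> by blast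
      thus "t^m*y \<noteq> b^n*z" by simp
    qed
  next
    assume P
    thus "\<forall>m n m' n'. (m, n) \<noteq> (m', n') \<longrightarrow> (\<forall>y y'. y \<in> K3 \<longrightarrow> y' \<in> K3 \<longrightarrow> t ^ m * (b ^ n * y) \<noteq> t ^ m' * (b ^ n' * y'))"
      using Dtoel by blast
  qed
  have III: "(\<forall>m n::nat. m > 0 \<longrightarrow> n > 0 \<longrightarrow>
            (S1 ^^ m) ` K \<inter> (S2 ^^ n) ` K = (S1 ^^ m) ` (S2 ^^ n) ` K) \<longleftrightarrow> P"
  proof
    assume H: "\<forall>m n::nat. m > 0 \<longrightarrow> n > 0 \<longrightarrow>
            (S1 ^^ m) ` K \<inter> (S2 ^^ n) ` K = (S1 ^^ m) ` (S2 ^^ n) ` K"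
    show P unfolding P_def
    proof (intro allI impI notI)
      fix m n :: nat and y z
      assume mn: "m>0" "n>0" and yz: "y\<in>K3" "z\<in>K3" and eq: "t^m*y = b^n*z"
      have "y \<in> K" "z \<in> K" using yz K3K by auto
      hence "t^m*y \<in> (\<lambda>x. t^m*x) ` K" "b^n*z \<in> (\<lambda>x. b^n*x) ` K" by auto
      hence "t^m*y \<in> (\<lambda>x. t^m*x) ` K \<inter> (\<lambda>x. b^n*x) ` K" using eq by simp
      moreover have "(\<lambda>x. t^m*x) ` K \<inter> (\<lambda>x. b^n*x) ` K = (\<lambda>x. t^m*x) ` (\<lambda>x. b^n*x) ` K"
        using H mn unfolding f1 f2 by simp
      ultimately have "t^m*y \<in> (\<lambda>x. t^m*x) ` (\<lambda>x. b^n*x) ` K" by simp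
      then obtain w where w: "w\<in>K" "t^m*y = t^m*(b^n*w)" by auto
      hence yw: "y = b^n*w" using assms(3) by simp
      have "b^n \<le> b" using mn assms(1,2) by (simp add: power_le_one power_decreasing[of 1 n b, simplified])
      hence "b^n*w \<le> b*1" using K01[OF w(1)] assms(1) by (intro mult_mono) auto
      thus False using yw K3b[OF yz(1)] assms(2) by simp
    qed
  next
    assume P
    show "\<forall>m n::nat. m > 0 \<longrightarrow> n > 0 \<longrightarrow>
            (S1 ^^ m) ` K \<inter> (S2 ^^ n) ` K = (S1 ^^ m) ` (S2 ^^ n) ` K"
      unfolding f1 f2
    proof (intro allI impI equalityI subsetI)
      fix m n :: nat and x
      assume "x \<in> (\<lambda>x. t^m*x) ` (\<lambda>x. b^n*x) ` K"
      then obtain k where k: "k\<in>K" "x = t^m*(b^n*k)" by auto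
      have "x = b^n*(t^m*k)" using k by simp
      moreover have "b^n*k \<in> K" "t^m*k \<in> K" using Kpow[OF k(1), of m 0] Kpow[OF k(1), of 0 n] by auto
      ultimately show "x \<in> (\<lambda>x. t^m*x) ` K \<inter> (\<lambda>x. b^n*x) ` K" using k by auto
    next
      fix m n :: nat and x
      assume "x \<in> (\<lambda>x. t^m*x) ` K \<inter> (\<lambda>x. b^n*x) ` K"
      then obtain y z where yz: "y\<in>K" "z\<in>K" "x = t^m*y" "x = b^n*z" by auto
      show "x \<in> (\<lambda>x. t^m*x) ` (\<lambda>x. b^n*x) ` K"
      proof (cases "y = 0")
        case True
        thus ?thesis using yz K0 by (auto intro!: image_eqI[of _ _ 0])
      next
        case False
        hence "z \<noteq> 0" using yz assms(1,3) by auto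
        obtain p q u where u: "u\<in>K3" "y = t^p*(b^q*u)" using dec[OF yz(1) False] by blast
        obtain rr ss vv where vv: "vv\<in>K3" "z = t^rr*(b^ss* vv)" using dec[OF yz(2) \<open>z\<noteq>0\<close>] by blast
        have "t^(m+p)*(b^q*u) = t^rr*(b^(ss+n)* vv)"
          using yz u vv by (simp add: power_add algebra_simps)
        hence eqs: "m+p = rr" "q = ss+n" using Dtoel[OF \<open>P\<close> u(1) vv(1)] by auto
        have "x = t^m*(b^n*(t^p*(b^ss*u)))" using yz u eqs by (simp add: power_add algebra_simps)
        moreover have "t^p*(b^ss*u) \<in> K" using Kpow K3K u by (meson subsetD)
        ultimately show ?thesis by auto
      qed
    qed
  qed
  have U': "(K = {0} \<union> (\<Union>m::nat. \<Union>n::nat. (S1 ^^ m) ` (S2 ^^ n) ` K3)) = True" using U by simp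
  show ?thesis unfolding eI D III U' by simp
qed

end
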